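(* Let $0<a\le b$. For $\mathbf v_c\in[a,b]^4$ let $\mathbf p_c$ be the unique maximizer of $L_{\mathbf v_c}$ over the simplex $\Delta$, and define $$R_{\max}(c)=\max_{\mathbf v_t\in[a,b]^4}\left[1-\left(\frac{L_{\mathbf v_t}(\mathbf p_c)}{\max_{\mathbf p\in\Delta}L_{\mathbf v_t}(\mathbf p)}\right)^{1/3}\right].$$ Then, as $\mathbf v_c$ ranges over $[a,b]^4$, $R_{\max}(c)$ attains its minimum if and only if $\mathbf p_c=(1/4,1/4,1/4,1/4)$, the uniform design.
   Context: Setting: a $2^2$ experiment with binary response under a generalized linear model with main-effects linear predictor $\eta=\beta_0+\beta_1x_1+\beta_2x_2$. A design is a vector $\mathbf p=(p_1,p_2,p_3,p_4)$ in the simplex $\Delta=\{p_i\ge0,\ \sum_i p_i=1\}$. With $w_i>0$ the GLM weights at the four design points and $v_i=1/w_i$, the $D$-criterion equals $16w_1w_2w_3w_4L_{\mathbf v}(\mathbf p)$ where $$L_{\mathbf v}(\mathbf p)=v_4p_1p_2p_3+v_3p_1p_2p_4+v_2p_1p_3p_4+v_1p_2p_3p_4 .$$ For every $\mathbf v$ with positive entries, $L_{\mathbf v}$ has a unique maximizer on $\Delta$ (the locally $D$-optimal design). $\mathbf v_c$ is the assumed value, $\mathbf v_t$ the true value, and the bracketed quantity is the relative loss of efficiency of using $\mathbf p_c$ when $\mathbf v_t$ is true; $R_{\max}(c)$ is a function of $\mathbf p_c$ only. *)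

theory Defs
  imports "HOL-Analysis.Analysis"
begin

text \<open>Designs and weight-inverse vectors are vectors in real^4, components indexed 1..4.\<close>

definition simplex4 :: "(real^4) set" where
  "simplex4 = {p. (\<forall>i. 0 \<le> p$i) \<and> (\<Sum>i\<in>UNIV. p$i) = 1}"

definition Lv :: "real^4 \<Rightarrow> real^4 \<Rightarrow> real" where
  "Lv v p = v$4 * p$1 * p$2 * p$3 + v$3 * p$1 * p$2 * p$4
          + v$2 * p$1 * p$3 * p$4 + v$1 * p$2 * p$3 * p$4"

text \<open>Maximum of L_v over the simplex (it is attained, the simplex being compact).\<close>
definition Lmax :: "real^4 \<Rightarrow> real" where
  "Lmax v = (SUP p\<in>simplex4. Lv v p)"

definition opt_design :: "real^4 \<Rightarrow> real^4" where
  "opt_design v = (THE p. p \<in> simplex4 \<and> (\<forall>q\<in>simplex4. Lv v q \<le> Lv v p))"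

definition box4 :: "real \<Rightarrow> real \<Rightarrow> (real^4) set" where
  "box4 a b = {v. \<forall>i. a \<le> v$i \<and> v$i \<le> b}"

definition eff_loss :: "real^4 \<Rightarrow> real^4 \<Rightarrow> real" where
  "eff_loss pc vt = 1 - (Lv vt pc / Lmax vt) powr (1/3)"

text \<open>R_max(c): maximum over v_t in [a,b]^4 (attained by compactness/continuity).\<close>
definition Rmax :: "real \<Rightarrow> real \<Rightarrow> real^4 \<Rightarrow> real" where
  "Rmax a b vc = (SUP vt\<in>box4 a b. eff_loss (opt_design vc) vt)"

definition uniform_design :: "real^4" where
  "uniform_design = (\<chi> i. 1/4)"

end

theory Submission
  imports Defs
begin


lemma amgm3:
  fixes x y z :: real
  assumes "0 \<le> x" "0 \<le> y" "0 \<le> z" "x + y + z = 1"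
  shows "27*x*y*z + ((x-y)^2+(y-z)^2+(z-x)^2)/2 \<le> 1"
proof -
  have id: "(x+y+z)^3 - 27*x*y*z - (x+y+z)*((x-y)^2+(y-z)^2+(z-x)^2)/2
      = 3*(x*(y-z)^2+y*(x-z)^2+z*(x-y)^2)"
    by (simp add: field_simps power2_eq_square power3_eq_cube)
  have "0 \<le> x*(y-z)^2+y*(x-z)^2+z*(x-y)^2" using assms by simp
  then show ?thesis using id assms(4) by simp
qed

lemma amgm3_le:
  fixes x y z :: real
  assumes "0 \<le> x" "0 \<le> y" "0 \<le> z" "x + y + z \<le> 1"
  shows "27*x*y*z \<le> 1"
proof -
  have A: "27*x*y*(1-x-y) + ((x - y)^2 + (y - (1 - x - y))^2 + (1 - x - y - x)^2) / 2 \<le> 1"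
    using amgm3[of x y "1-x-y"] assms by simp
  have "0 \<le> ((x - y)^2 + (y - (1 - x - y))^2 + (1 - x - y - x)^2) / 2" by simp
  then have "27*x*y*(1-x-y) \<le> 1" using A by linarith
  moreover have "x*y*z \<le> x*y*(1-x-y)" using assms
    by (intro mult_left_mono) auto
  ultimately show ?thesis by linarith
qed

lemma amgm3_eq:
  fixes x y z :: real
  assumes "0 \<le> x" "0 \<le> y" "0 \<le> z" "x + y + z = 1" "27*x*y*z = 1"
  shows "x = 1/3 \<and> y = 1/3 \<and> z = 1/3"
proof -
  have key: "\<And>A Q::real. A + Q/2 \<le> 1 \<Longrightarrow> A = 1 \<Longrightarrow> Q \<le> 0" by linarith
  have "((x-y)^2+(y-z)^2+(z-x)^2) \<le> 0" by (rule key[OF amgm3[OF assms(1-4)] assms(5)])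
  then have "(x-y)^2 = 0" "(y-z)^2 = 0" 
    by (smt (verit) zero_le_power2)+
  then show ?thesis using assms(4) by simp
qed

definition F :: "real \<Rightarrow> real \<Rightarrow> real \<Rightarrow> real \<Rightarrow> real \<Rightarrow> real \<Rightarrow> real \<Rightarrow> real \<Rightarrow> real" where
  "F v1 v2 v3 v4 p1 p2 p3 p4 = v4*p1*p2*p3 + v3*p1*p2*p4 + v2*p1*p3*p4 + v1*p2*p3*p4"

lemma caseA:
  fixes v1 v2 v3 v4 p1 p2 p3 p4 :: real
  assumes "0<v1" "0<v2" "0<v3" "v1+v2+v3 \<le> v4"
    "0\<le>p1" "0\<le>p2" "0\<le>p3" "0\<le>p4" "p1+p2+p3+p4=1"
    "v4/27 \<le> F v1 v2 v3 v4 p1 p2 p3 p4"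
  shows "p1 = 1/3 \<and> p2 = 1/3 \<and> p3 = 1/3 \<and> p4 = 0"
proof -
  define \<delta> where "\<delta> = v4-v1-v2-v3"
  have id: "v4/27 - F v1 v2 v3 v4 p1 p2 p3 p4 = \<delta>*(1/27 - p1*p2*p3) + v1*(1/27 - p2*p3*(p1+p4))
     + v2*(1/27 - p1*p3*(p2+p4)) + v3*(1/27 - p1*p2*(p3+p4))"
    unfolding F_def \<delta>_def by (simp add: algebra_simps add_divide_distrib diff_divide_distrib)
  have t0: "27*p1*p2*p3 \<le> 1" using amgm3_le[of p1 p2 p3] assms by simp
  have t1: "27*p2*p3*(p1+p4) \<le> 1" using amgm3_le[of p2 p3 "p1+p4"] assms by simp
  have t2: "27*p1*p3*(p2+p4) \<le> 1" using amgm3_le[of p1 p3 "p2+p4"] assms by simp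
  have t3: "27*p1*p2*(p3+p4) \<le> 1" using amgm3_le[of p1 p2 "p3+p4"] assms by simp
  have n0: "0 \<le> \<delta>*(1/27 - p1*p2*p3)" using t0 assms(4) unfolding \<delta>_def by (intro mult_nonneg_nonneg) auto
  have n1: "0 \<le> v1*(1/27 - p2*p3*(p1+p4))" using t1 assms(1) by (intro mult_nonneg_nonneg) auto
  have n2: "0 \<le> v2*(1/27 - p1*p3*(p2+p4))" using t2 assms(2) by (intro mult_nonneg_nonneg) auto
  have n3: "0 \<le> v3*(1/27 - p1*p2*(p3+p4))" using t3 assms(3) by (intro mult_nonneg_nonneg) auto
  have "v1*(1/27 - p2*p3*(p1+p4)) = 0" "v2*(1/27 - p1*p3*(p2+p4)) = 0"
    using id n0 n1 n2 n3 assms(10) by linarith+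
  then have e1: "27*p2*p3*(p1+p4) = 1" and e2: "27*p1*p3*(p2+p4) = 1" using assms(1,2) by auto
  have "p2 = 1/3 \<and> p3 = 1/3 \<and> p1+p4 = 1/3" using amgm3_eq[of p2 p3 "p1+p4"] e1 assms by simp
  moreover have "p1 = 1/3" using amgm3_eq[of p1 p3 "p2+p4"] e2 assms by simp
  ultimately show ?thesis by simp
qed

lemma bd4:
  fixes v1 v2 v3 v4 p1 p2 p3 p4 :: real
  assumes "0 \<le> v4" "0\<le>p1" "0\<le>p2" "0\<le>p3" "p4 = 0" "p1+p2+p3+p4=1"
  shows "F v1 v2 v3 v4 p1 p2 p3 p4 \<le> v4/27"
proof -
  have "27*p1*p2*p3 \<le> 1" using amgm3_le[of p1 p2 p3] assms by simp
  then have "v4*(27*p1*p2*p3) \<le> v4" using assms(1) by (simp add: mult_left_le)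
  then show ?thesis using assms(5) by (simp add: F_def)
qed

lemma pert:
  fixes v1 v2 v3 v4 :: real
  assumes "0 < v4" "v4 < v1+v2+v3"
  shows "\<exists>\<epsilon>. 0 < \<epsilon> \<and> \<epsilon> < 1 \<and> v4/27 < F v1 v2 v3 v4 ((1-\<epsilon>)/3) ((1-\<epsilon>)/3) ((1-\<epsilon>)/3) \<epsilon>"
proof -
  define \<delta> where "\<delta> = v1+v2+v3-v4"
  have dp: "0 < \<delta>" using assms by (simp add: \<delta>_def)
  define \<epsilon> where "\<epsilon> = \<delta>/(4*(v4+\<delta>))"
  have ep: "0 < \<epsilon>" using dp assms by (simp add: \<epsilon>_def)
  have e4: "\<epsilon> \<le> 1/4" using dp assms by (simp add: \<epsilon>_def field_simps)
  have id: "27*F v1 v2 v3 v4 ((1-\<epsilon>)/3) ((1-\<epsilon>)/3) ((1-\<epsilon>)/3) \<epsilon> - v4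
      = \<epsilon>*(3*\<delta>*(1-\<epsilon>)^2 - v4*\<epsilon>*(3-2*\<epsilon>))"
    by (simp add: F_def \<delta>_def field_simps power2_eq_square)
  have h1: "(3/4)^2 \<le> (1-\<epsilon>)^2" using e4 by (intro power_mono) auto
  have h2: "v4*\<epsilon>*(3-2*\<epsilon>) \<le> 3*(v4*\<epsilon>)" using ep assms(1) by (simp add: algebra_simps)
  have h3: "v4*\<epsilon>*(4*(v4+\<delta>)) = v4*\<delta>" using dp assms(1) by (simp add: \<epsilon>_def)
  have h4: "v4*\<delta> < (v4+\<delta>)*\<delta>" using dp by (simp add: algebra_simps)
  have h5: "v4*\<epsilon> < \<delta>/4"
  proof -
    have "(v4*\<epsilon>)*(4*(v4+\<delta>)) < (\<delta>/4)*(4*(v4+\<delta>))" using h3 h4 by (simp add: algebra_simps)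
    then show ?thesis using dp assms(1) by (smt (verit) mult_right_mono)
  qed
  have h6: "3*\<delta>*(3/4)^2 \<le> 3*\<delta>*(1-\<epsilon>)^2" using h1 dp by (intro mult_left_mono) auto
  have h7: "3*\<delta>*(3/4)^2 = 27*\<delta>/16" by (simp add: power2_eq_square)
  have "0 < 3*\<delta>*(1-\<epsilon>)^2 - v4*\<epsilon>*(3-2*\<epsilon>)" using h2 h5 h6 h7 dp by linarith
  then have "0 < \<epsilon>*(3*\<delta>*(1-\<epsilon>)^2 - v4*\<epsilon>*(3-2*\<epsilon>))" using ep by simp
  then show ?thesis using id ep e4 by (intro exI[of _ \<epsilon>]) auto
qed

lemma small_t:
  fixes c1 c2 c3 \<epsilon> :: real
  assumes "0 < \<epsilon>" "c1 \<noteq> 0"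
  shows "\<exists>t. abs (t) \<le> \<epsilon> \<and> 0 < c1*t + c2*t^2 + c3*t^3"
proof -
  define w where "w = min (min \<epsilon> 1) (abs (c1)/(2*(abs (c2)+abs (c3))+1))"
  have sp: "0 < w" using assms by (simp add: w_def)
  have s1: "w \<le> 1" "w \<le> \<epsilon>" by (simp_all add: w_def)
  have s2: "w*(2*(abs (c2)+abs (c3))+1) \<le> abs (c1)"
    unfolding w_def by (smt (verit) abs_ge_zero min.cobounded2 pos_le_divide_eq)
  define t where "t = sgn c1 * w"
  have at: "abs (t) = w" using sp assms(2) by (simp add: t_def abs_mult)
  have c1t: "c1*t = abs c1 * w" using assms(2) by (simp add: t_def abs_sgn mult.assoc[symmetric] sgn_mult_self_eq)
  have "abs (c2*t^2 + c3*t^3) \<le> (abs (c2)+abs (c3))*w^2"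
  proof -
    have "abs (c2*t^2 + c3*t^3) \<le> abs (c2)*w^2 + abs (c3)*w^3"
    proof -
      have "abs (c2*t^2) = abs c2 * w^2" "abs (c3*t^3) = abs c3 * w^3" using at by (simp_all add: abs_mult power_abs)
      then show ?thesis using abs_triangle_ineq[of "c2*t^2" "c3*t^3"] by linarith
    qed
    moreover have "abs (c3)*w^3 \<le> abs (c3)*w^2"
      using sp s1 by (intro mult_left_mono) (auto simp: power_decreasing)
    ultimately show ?thesis by (simp add: algebra_simps)
  qed
  moreover have "(abs (c2)+abs (c3))*w^2 < abs (c1)*w"
  proof -
    have "(abs (c2)+abs (c3))*w \<le> abs (c1)/2" using s2 sp by (simp add: algebra_simps)
    moreover have "abs (c1)/2 < abs (c1)" using assms(2) by simp
    ultimately have "(abs (c2)+abs (c3))*w < abs (c1)" by linarith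
    then show ?thesis using sp by (simp add: power2_eq_square mult.assoc[symmetric])
  qed
  ultimately have "0 < c1*t + c2*t^2 + c3*t^3" using c1t by linarith
  then show ?thesis using at s1 by (intro exI[of _ t]) auto
qed




lemma Lv_F: "Lv v p = F (v$1) (v$2) (v$3) (v$4) (p$1) (p$2) (p$3) (p$4)"
  by (simp add: Lv_def F_def)

lemma simplex4_iff: "p \<in> simplex4 \<longleftrightarrow> 0 \<le> p$1 \<and> 0 \<le> p$2 \<and> 0 \<le> p$3 \<and> 0 \<le> p$4 \<and> p$1+p$2+p$3+p$4 = 1"
  by (simp add: simplex4_def forall_4 sum_4)

definition ismax :: "real^4 \<Rightarrow> real^4 \<Rightarrow> bool" where
  "ismax v p \<longleftrightarrow> p \<in> simplex4 \<and> (\<forall>q\<in>simplex4. Lv v q \<le> Lv v p)"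

definition qk :: "4 \<Rightarrow> real^4" where "qk k = (\<chi> i. if i = k then 0 else 1/3)"
definition tr :: "4 \<Rightarrow> 4 \<Rightarrow> 4" where "tr k i = (if i = k then 4 else if i = 4 then k else i)"
definition perm :: "4 \<Rightarrow> real^4 \<Rightarrow> real^4" where "perm k x = (\<chi> i. x $ tr k i)"

lemma tr_tr[simp]: "tr k (tr k i) = i" by (auto simp: tr_def)
lemma perm_nth[simp]: "perm k x $ i = x $ tr k i" by (simp add: perm_def)
lemma perm_perm[simp]: "perm k (perm k x) = x" by (simp add: vec_eq_iff)

lemma sum_tr: "(\<Sum>i\<in>UNIV. f (tr k i)) = (\<Sum>i\<in>UNIV. (f i::real))"
  by (rule sum.reindex_bij_witness[of _ "tr k" "tr k"]) auto

lemma perm_simplex: "p \<in> simplex4 \<Longrightarrow> perm k p \<in> simplex4"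
  unfolding simplex4_def using sum_tr[of "\<lambda>i. p$i" k] by auto

lemma cases4: obtains "k = 1" | "k = 2" | "k = 3" | "(k::4) = 4"
  using exhaust_4 by blast

lemma Lv_perm: "Lv (perm k v) (perm k p) = Lv v p"
  by (cases k rule: cases4) (simp_all add: Lv_def tr_def algebra_simps)

lemma Lv_perm2: "Lv (perm k v) q = Lv v (perm k q)"
  using Lv_perm[of k v "perm k q"] by simp

lemma perm_qk: "perm k (qk 4) = qk k"
  by (auto simp: vec_eq_iff qk_def tr_def)

lemma qk_simplex: "qk k \<in> simplex4"
  by (cases k rule: cases4) (simp_all add: simplex4_iff qk_def)

lemma ismax_perm: "ismax v p \<Longrightarrow> ismax (perm k v) (perm k p)"
  unfolding ismax_def using perm_simplex Lv_perm2 Lv_perm by (metis perm_perm)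

lemma B4:
  assumes vpos: "\<forall>i. 0 < v$i" and mp: "ismax v p" and p4: "p$4 = 0" and mr: "ismax v r"
  shows "r = qk 4"
proof -
  have ps: "p \<in> simplex4" using mp by (simp add: ismax_def)
  have Lp: "Lv v p \<le> v$4/27"
    using ps p4 vpos bd4[of "v$4" "p$1" "p$2" "p$3" "p$4" "v$1" "v$2" "v$3"]
    by (simp add: Lv_F simplex4_iff less_imp_le)
  have big: "v$1 + v$2 + v$3 \<le> v$4"
  proof (rule ccontr)
    assume "\<not> ?thesis"
    then obtain \<epsilon> where e: "0 < \<epsilon>" "\<epsilon> < 1"
      "v$4/27 < F (v$1) (v$2) (v$3) (v$4) ((1-\<epsilon>)/3) ((1-\<epsilon>)/3) ((1-\<epsilon>)/3) \<epsilon>"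
      using pert[of "v$4" "v$1" "v$2" "v$3"] vpos by force
    define z :: "real^4" where "z = (\<chi> i. if i = 4 then \<epsilon> else (1-\<epsilon>)/3)"
    have zs: "z \<in> simplex4" using e by (simp add: simplex4_iff z_def field_simps)
    have "Lv v z = F (v$1) (v$2) (v$3) (v$4) ((1-\<epsilon>)/3) ((1-\<epsilon>)/3) ((1-\<epsilon>)/3) \<epsilon>"
      by (simp add: Lv_F z_def)
    then have "Lv v p < Lv v z" using e Lp by linarith
    then show False using mp zs by (auto simp: ismax_def)
  qed
  have rs: "r \<in> simplex4" using mr by (simp add: ismax_def)
  have "Lv v (qk 4) = v$4/27" by (simp add: Lv_def qk_def)
  moreover have "Lv v (qk 4) \<le> Lv v r" using mr qk_simplex by (auto simp: ismax_def)
  ultimately have "v$4/27 \<le> Lv v r" by simp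
  then have "r$1 = 1/3 \<and> r$2 = 1/3 \<and> r$3 = 1/3 \<and> r$4 = 0"
    using caseA[of "v$1" "v$2" "v$3" "v$4" "r$1" "r$2" "r$3" "r$4"] vpos big rs
    by (simp add: Lv_F simplex4_iff)
  then show ?thesis by (simp add: vec_eq_iff forall_4 qk_def)
qed

lemma Bk:
  assumes vpos: "\<forall>i. 0 < v$i" and mp: "ismax v p" and pk: "p$k = 0" and mr: "ismax v r"
  shows "r = qk k"
proof -
  have "perm k r = qk 4"
  proof (rule B4[of "perm k v" "perm k p"])
    show "\<forall>i. 0 < perm k v $ i" using vpos by simp
    show "ismax (perm k v) (perm k p)" using mp by (rule ismax_perm)
    show "perm k p $ 4 = 0" using pk by (auto simp: tr_def)
    show "ismax (perm k v) (perm k r)" using mr by (rule ismax_perm)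
  qed
  then have "perm k (perm k r) = perm k (qk 4)" by simp
  then show ?thesis by (simp add: perm_qk)
qed




definition C1 :: "real \<Rightarrow> real \<Rightarrow> real \<Rightarrow> real \<Rightarrow> real \<Rightarrow> real \<Rightarrow> real \<Rightarrow> real \<Rightarrow> real \<Rightarrow> real \<Rightarrow> real \<Rightarrow> real \<Rightarrow> real" where
  "C1 v1 v2 v3 v4 p1 p2 p3 p4 d1 d2 d3 d4 =
     v4*(d1*p2*p3 + p1*d2*p3 + p1*p2*d3) + v3*(d1*p2*p4 + p1*d2*p4 + p1*p2*d4)
   + v2*(d1*p3*p4 + p1*d3*p4 + p1*p3*d4) + v1*(d2*p3*p4 + p2*d3*p4 + p2*p3*d4)"

lemma F_cubic:
  "F v1 v2 v3 v4 (p1+t*d1) (p2+t*d2) (p3+t*d3) (p4+t*d4) =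
   F v1 v2 v3 v4 p1 p2 p3 p4 + t*C1 v1 v2 v3 v4 p1 p2 p3 p4 d1 d2 d3 d4
   + t^2*C1 v1 v2 v3 v4 d1 d2 d3 d4 p1 p2 p3 p4 + t^3*F v1 v2 v3 v4 d1 d2 d3 d4"
  by (simp add: F_def C1_def power2_eq_square power3_eq_cube algebra_simps)

lemma line_in:
  assumes "p \<in> simplex4" "d$1+d$2+d$3+d$4 = 0" "\<forall>i. 0 \<le> p$i + t * d$i"
  shows "p + t *\<^sub>R d \<in> simplex4"
proof -
  have "p$1+p$2+p$3+p$4 + t*(d$1+d$2+d$3+d$4) = 1" using assms(1,2) by (simp add: simplex4_iff)
  then show ?thesis using assms(3) by (simp add: simplex4_iff forall_4 algebra_simps)
qed

lemma interior_unique: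
  assumes vpos: "\<forall>i. 0 < v$i" and mp: "ismax v p" and mq: "ismax v q"
    and pp: "\<forall>i. 0 < p$i" and qp: "\<forall>i. 0 < q$i" and ne: "p \<noteq> q"
  shows False
proof -
  define d where "d = q - p"
  have ps: "p \<in> simplex4" and qs: "q \<in> simplex4" using mp mq by (auto simp: ismax_def)
  have sumd: "d$1+d$2+d$3+d$4 = 0" using ps qs by (simp add: simplex4_iff d_def)
  define c0 where "c0 = Lv v p"
  define c1 where "c1 = C1 (v$1) (v$2) (v$3) (v$4) (p$1) (p$2) (p$3) (p$4) (d$1) (d$2) (d$3) (d$4)"
  define c2 where "c2 = C1 (v$1) (v$2) (v$3) (v$4) (d$1) (d$2) (d$3) (d$4) (p$1) (p$2) (p$3) (p$4)"
  define c3 where "c3 = Lv v d"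
  have phi: "\<And>t. Lv v (p + t *\<^sub>R d) = c0 + c1*t + c2*t^2 + c3*t^3"
    by (simp add: Lv_F F_cubic c0_def c1_def c2_def c3_def algebra_simps)
  have le: "\<And>t. \<forall>i. 0 \<le> p$i + t * d$i \<Longrightarrow> c1*t + c2*t^2 + c3*t^3 \<le> 0"
  proof -
    fix t assume "\<forall>i. 0 \<le> p$i + t * d$i"
    then have "p + t *\<^sub>R d \<in> simplex4" using line_in[OF ps sumd] by blast
    then have "Lv v (p + t *\<^sub>R d) \<le> c0" using mp by (simp add: ismax_def c0_def)
    then show "c1*t + c2*t^2 + c3*t^3 \<le> 0" using phi[of t] by linarith
  qed
  define m where "m = min (min (min (p$1) (p$2)) (min (p$3) (p$4))) (min (min (q$1) (q$2)) (min (q$3) (q$4)))"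
  have m0: "0 < m" using pp qp by (simp add: m_def)
  have mp': "\<forall>i. m \<le> p$i" "\<forall>i. m \<le> q$i" unfolding m_def forall_4 by linarith+
  define D where "D = abs (d$1) + abs (d$2) + abs (d$3) + abs (d$4)"
  have dD: "\<forall>i. abs (d$i) \<le> D" by (simp add: D_def forall_4)
  have D0: "0 \<le> D" by (simp add: D_def)
  define e0 where "e0 = m/(D+1)"
  have e0p: "0 < e0" using m0 D0 by (simp add: e0_def)
  have e0D: "e0*D \<le> m"
  proof -
    have "e0*(D+1) = m" using D0 by (simp add: e0_def)
    then show ?thesis using e0p by (simp add: algebra_simps)
  qed
  have small: "\<And>t. abs t \<le> e0 \<Longrightarrow> \<forall>i. 0 \<le> p$i + t * d$i"
  proof (intro allI)
    fix t i assume "abs t \<le> e0"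
    then have "abs (t * d$i) \<le> e0 * D" using dD by (simp add: abs_mult mult_mono)
    then show "0 \<le> p$i + t * d$i" using e0D mp' by (smt (verit))
  qed
  have c1z: "c1 = 0"
  proof (rule ccontr)
    assume "c1 \<noteq> 0"
    then obtain t where "abs t \<le> e0" "0 < c1*t + c2*t^2 + c3*t^3" using small_t[OF e0p] by blast
    then show False using le small by fastforce
  qed
  have "Lv v q = c0" using mp mq ps qs by (simp add: ismax_def c0_def order_antisym)
  moreover have "p + 1 *\<^sub>R d = q" by (simp add: d_def)
  ultimately have s1: "c1 + c2 + c3 = 0" using phi[of 1] by simp
  have "\<forall>i. 0 \<le> p$i + (1/2) * d$i"
  proof
    fix i have "0 < p$i" "0 < q$i" using pp qp by auto
    then show "0 \<le> p$i + (1/2) * d$i" by (simp add: d_def algebra_simps)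
  qed
  then have "c1*(1/2) + c2*(1/2)^2 + c3*(1/2)^3 \<le> 0" by (rule le)
  then have h2: "c2 \<le> 0" using s1 c1z by (simp add: power2_eq_square power3_eq_cube)
  define T where "T = 1 + e0"
  have "\<forall>i. 0 \<le> p$i + T * d$i"
  proof
    fix i
    have "p$i + T * d$i = q$i + e0*d$i" by (simp add: T_def d_def algebra_simps)
    moreover have "abs (e0*d$i) \<le> e0*D" using dD e0p by (simp add: abs_mult mult_left_mono)
    moreover have "-(e0*d$i) \<le> e0*D" using \<open>abs (e0*d$i) \<le> e0*D\<close> by (rule abs_le_D2)
    moreover have "m \<le> q$i" using mp' by simp
    ultimately show "0 \<le> p$i + T * d$i" using e0D by linarith
  qed
  then have "c1*T + c2*T^2 + c3*T^3 \<le> 0" by (rule le)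
  moreover have "c3 = -c2" using s1 c1z by simp
  ultimately have "c2*T^2 - c2*T^3 \<le> 0" using c1z by simp
  moreover have "c2*T^2 - c2*T^3 = (-c2)*(e0*T^2)" by (simp add: T_def power2_eq_square power3_eq_cube algebra_simps)
  ultimately have "(-c2)*(e0*T^2) \<le> 0" by simp
  moreover have "0 < e0*T^2" using e0p by (simp add: T_def)
  ultimately have "c2 \<ge> 0" by (smt (verit) mult_pos_pos)
  then have c2z: "c2 = 0" using h2 by simp
  then have c3z: "c3 = 0" using s1 c1z by simp
  have const: "\<And>t. Lv v (p + t *\<^sub>R d) = c0" using phi c1z c2z c3z by simp
  have "\<exists>i. d$i < 0"
  proof (rule ccontr)
    assume "\<not> ?thesis"
    then have "\<forall>i. 0 \<le> d$i" by (auto simp: not_less)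
    then have "\<forall>i. d$i = 0" using sumd by (simp add: forall_4)
    then have "q = p" by (simp add: d_def vec_eq_iff)
    then show False using ne by simp
  qed
  define J where "J = {i. d$i < 0}"
  define S where "S = (\<lambda>i. p$i/(-d$i)) ` J"
  have fS: "finite S" "S \<noteq> {}" using \<open>\<exists>i. d$i < 0\<close> by (auto simp: S_def J_def)
  define ts where "ts = Min S"
  obtain k where kJ: "k \<in> J" and tsk: "ts = p$k/(-d$k)"
    using Min_in[OF fS] unfolding ts_def S_def by auto
  have tsle: "\<And>i. d$i < 0 \<Longrightarrow> ts \<le> p$i/(-d$i)"
    unfolding ts_def using fS by (intro Min_le) (auto simp: S_def J_def)
  have dk: "d$k < 0" using kJ by (simp add: J_def)
  have ts0: "0 < ts" using tsk dk pp by (simp add: divide_pos_neg)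
  have feas: "\<forall>i. 0 \<le> p$i + ts * d$i"
  proof
    fix i show "0 \<le> p$i + ts * d$i"
    proof (cases "d$i < 0")
      case True
      have nd: "0 < -d$i" using True by simp
      have "ts*(-d$i) \<le> (p$i/(-d$i))*(-d$i)" using tsle[OF True] nd by (intro mult_right_mono) auto
      also have "\<dots> = p$i" using nd by simp
      finally have "ts*(-d$i) \<le> p$i" .
      then show ?thesis by simp
    next
      case False
      then show ?thesis using ts0 pp by (smt (verit) mult_nonneg_nonneg)
    qed
  qed
  define z where "z = p + ts *\<^sub>R d"
  have zs: "z \<in> simplex4" unfolding z_def using line_in[OF ps sumd feas] .
  have zk: "z$k = 0" using tsk dk by (simp add: z_def)
  have "ismax v z" using zs const mp unfolding ismax_def z_def c0_def by simp
  then have "p = qk k" using Bk[OF vpos _ zk mp] by blast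
  then have "p$k = 0" by (simp add: qk_def)
  then show False using pp by (metis less_irrefl)
qed




lemma e3_bound:
  fixes a b c d :: real
  assumes "0 \<le> a" "0 \<le> b" "0 \<le> c" "0 \<le> d" "a+b+c+d = 1"
  shows "16*(a*b*c + a*b*d + a*c*d + b*c*d) + ((a-b)^2+(a-c)^2+(a-d)^2+(b-c)^2+(b-d)^2+(c-d)^2)/6 \<le> 1"
proof -
  let ?e = "a+b+c+d"
  have id: "?e^3 - 16*(a*b*c + a*b*d + a*c*d + b*c*d) =
     ((?e+a+b)*(a-b)^2 + (?e+a+c)*(a-c)^2 + (?e+a+d)*(a-d)^2 + (?e+b+c)*(b-c)^2 + (?e+b+d)*(b-d)^2 + (?e+c+d)*(c-d)^2)/6
     + 3/2*( (a*(b-c)^2+b*(a-c)^2+c*(a-b)^2) + (a*(b-d)^2+b*(a-d)^2+d*(a-b)^2)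
           + (a*(c-d)^2+c*(a-d)^2+d*(a-c)^2) + (b*(c-d)^2+c*(b-d)^2+d*(b-c)^2))"
    by (simp add: field_simps power2_eq_square power3_eq_cube)
  have n1: "0 \<le> (a*(b-c)^2+b*(a-c)^2+c*(a-b)^2) + (a*(b-d)^2+b*(a-d)^2+d*(a-b)^2)
           + (a*(c-d)^2+c*(a-d)^2+d*(a-c)^2) + (b*(c-d)^2+c*(b-d)^2+d*(b-c)^2)"
    using assms by simp
  have n2: "((?e+a+b)*(a-b)^2 + (?e+a+c)*(a-c)^2 + (?e+a+d)*(a-d)^2 + (?e+b+c)*(b-c)^2 + (?e+b+d)*(b-d)^2 + (?e+c+d)*(c-d)^2)
     \<ge> ((a-b)^2+(a-c)^2+(a-d)^2+(b-c)^2+(b-d)^2+(c-d)^2)"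
  proof -
    have h: "\<And>x y t. 0 \<le> x \<Longrightarrow> 0 \<le> y \<Longrightarrow> (1+x+y)*t^2 \<ge> (t::real)^2"
    proof -
      fix x y t :: real assume "0 \<le> x" "0 \<le> y"
      then have "0 \<le> (x+y)*t^2" by simp
      then show "(1+x+y)*t^2 \<ge> t^2" by (simp add: algebra_simps)
    qed
    have "(?e+a+b)*(a-b)^2 \<ge> (a-b)^2" "(?e+a+c)*(a-c)^2 \<ge> (a-c)^2" "(?e+a+d)*(a-d)^2 \<ge> (a-d)^2"
      "(?e+b+c)*(b-c)^2 \<ge> (b-c)^2" "(?e+b+d)*(b-d)^2 \<ge> (b-d)^2" "(?e+c+d)*(c-d)^2 \<ge> (c-d)^2"
      using assms by (auto intro!: h)
    then show ?thesis by linarith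
  qed
  have key: "\<And>E3 A B Q::real. 1 - 16*E3 = A/6 + 3/2*B \<Longrightarrow> 0 \<le> B \<Longrightarrow> Q \<le> A \<Longrightarrow> 16*E3 + Q/6 \<le> 1"
    by linarith
  show ?thesis by (rule key[OF id[unfolded assms(5) power_one] n1 n2[unfolded assms(5)]])
qed

lemma unique:
  assumes vpos: "\<forall>i. 0 < v$i" and mp: "ismax v p" and mq: "ismax v q"
  shows "p = q"
proof (cases "\<exists>k. p$k = 0 \<or> q$k = 0")
  case True
  then obtain k where "p$k = 0 \<or> q$k = 0" by blast
  then show ?thesis
  proof
    assume pk: "p$k = 0"
    show ?thesis using Bk[OF vpos mp pk mp] Bk[OF vpos mp pk mq] by simp
  next
    assume qk: "q$k = 0"
    show ?thesis using Bk[OF vpos mq qk mp] Bk[OF vpos mq qk mq] by simp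
  qed
next
  case False
  have "p \<in> simplex4" "q \<in> simplex4" using mp mq by (auto simp: ismax_def)
  then have "\<forall>i. 0 \<le> p$i" "\<forall>i. 0 \<le> q$i" by (auto simp: simplex4_def)
  then have pp: "\<forall>i. 0 < p$i" and qp: "\<forall>i. 0 < q$i" using False by (auto simp: order_le_less)
  show ?thesis using interior_unique[OF vpos mp mq pp qp] by blast
qed

lemma compact_simplex4: "compact simplex4"
proof -
  have eq: "simplex4 = {p::real^4. 0 \<le> p$1 \<and> 0 \<le> p$2 \<and> 0 \<le> p$3 \<and> 0 \<le> p$4 \<and> p$1+p$2+p$3+p$4 = 1}"
    by (auto simp: simplex4_iff)
  have cl: "closed simplex4" unfolding eq
    by (intro closed_Collect_conj closed_Collect_le closed_Collect_eq continuous_intros)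
  have "\<forall>x\<in>simplex4. norm x \<le> 1"
  proof
    fix x :: "real^4" assume x: "x \<in> simplex4"
    have "norm x \<le> (\<Sum>i\<in>UNIV. \<bar>x$i\<bar>)" by (rule norm_le_l1_cart)
    also have "\<dots> = (\<Sum>i\<in>UNIV. x$i)" using x by (simp add: simplex4_def)
    also have "\<dots> = 1" using x by (simp add: simplex4_def)
    finally show "norm x \<le> 1" .
  qed
  then have "bounded simplex4" by (auto simp: bounded_iff)
  then show ?thesis using cl by (simp add: compact_eq_bounded_closed)
qed

lemma exists_max: "\<exists>p. ismax v p"
proof -
  have "simplex4 \<noteq> {}" using qk_simplex by blast
  moreover have "continuous_on simplex4 (Lv v)" unfolding Lv_def by (intro continuous_intros)
  ultimately obtain p where "p \<in> simplex4" "\<forall>q\<in>simplex4. Lv v q \<le> Lv v p"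
    using continuous_attains_sup[OF compact_simplex4] by blast
  then show ?thesis by (auto simp: ismax_def)
qed

lemma opt_ismax:
  assumes vpos: "\<forall>i. 0 < v$i"
  shows "ismax v (opt_design v)"
proof -
  have "\<exists>!p. ismax v p" using exists_max unique[OF vpos] by blast
  then have "ismax v (THE p. ismax v p)" by (rule theI')
  then show ?thesis by (simp add: opt_design_def ismax_def)
qed

lemma opt_eq:
  assumes vpos: "\<forall>i. 0 < v$i" and "ismax v p"
  shows "opt_design v = p"
  using unique[OF vpos opt_ismax[OF vpos] assms(2)] .

lemma Lmax_eq:
  assumes vpos: "\<forall>i. 0 < v$i"
  shows "Lmax v = Lv v (opt_design v)" and "\<And>q. q \<in> simplex4 \<Longrightarrow> Lv v q \<le> Lmax v"
proof -
  have m: "ismax v (opt_design v)" by (rule opt_ismax[OF vpos])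
  show e: "Lmax v = Lv v (opt_design v)" unfolding Lmax_def
    using m by (intro cSup_eq_maximum) (auto simp: ismax_def)
  fix q assume "q \<in> simplex4" then show "Lv v q \<le> Lmax v" using m e by (simp add: ismax_def)
qed




definition e3 :: "real^4 \<Rightarrow> real" where
  "e3 p = p$1*p$2*p$3 + p$1*p$2*p$4 + p$1*p$3*p$4 + p$2*p$3*p$4"

lemma e3_le: assumes "p \<in> simplex4" shows "16 * e3 p \<le> 1"
proof -
  have "16 * e3 p + ((p$1-p$2)^2+(p$1-p$3)^2+(p$1-p$4)^2+(p$2-p$3)^2+(p$2-p$4)^2+(p$3-p$4)^2)/6 \<le> 1"
    using e3_bound[of "p$1" "p$2" "p$3" "p$4"] assms by (simp add: simplex4_iff e3_def)
  moreover have "0 \<le> ((p$1-p$2)^2+(p$1-p$3)^2+(p$1-p$4)^2+(p$2-p$3)^2+(p$2-p$4)^2+(p$3-p$4)^2)/6" by simp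
  ultimately show ?thesis by linarith
qed

lemma e3_lt: assumes "p \<in> simplex4" "p \<noteq> uniform_design" shows "16 * e3 p < 1"
proof -
  define Q where "Q = ((p$1-p$2)^2+(p$1-p$3)^2+(p$1-p$4)^2+(p$2-p$3)^2+(p$2-p$4)^2+(p$3-p$4)^2)/6"
  have A: "16 * e3 p + Q \<le> 1"
    using e3_bound[of "p$1" "p$2" "p$3" "p$4"] assms by (simp add: simplex4_iff e3_def Q_def)
  have "0 < Q"
  proof (rule ccontr)
    assume "\<not> 0 < Q"
    then have "(p$1-p$2)^2+(p$1-p$3)^2+(p$1-p$4)^2+(p$2-p$3)^2+(p$2-p$4)^2+(p$3-p$4)^2 \<le> 0"
      by (simp add: Q_def)
    then have "(p$1-p$2)^2 = 0" "(p$1-p$3)^2 = 0" "(p$1-p$4)^2 = 0"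
      by (smt (verit) zero_le_power2)+
    then have "p$2 = p$1" "p$3 = p$1" "p$4 = p$1" by simp_all
    moreover have "p$1+p$2+p$3+p$4 = 1" using assms(1) by (simp add: simplex4_iff)
    ultimately have "p = uniform_design" by (simp add: vec_eq_iff forall_4 uniform_design_def)
    then show False using assms(2) by simp
  qed
  then show ?thesis using A by linarith
qed

lemma u_simplex: "uniform_design \<in> simplex4"
  by (simp add: simplex4_iff uniform_design_def)

lemma e3_u: "e3 uniform_design = 1/16"
  by (simp add: e3_def uniform_design_def)

lemma Lv_u: "Lv v uniform_design = (v$1+v$2+v$3+v$4)/64"
  by (simp add: Lv_def uniform_design_def field_simps)

lemma box_iff: "v \<in> box4 a b \<longleftrightarrow> (\<forall>i. a \<le> v$i \<and> v$i \<le> b)"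
  by (simp add: box4_def)

lemma Lv_le_b:
  assumes "v \<in> box4 a b" "p \<in> simplex4" shows "Lv v p \<le> b * e3 p"
proof -
  have v: "v$1 \<le> b" "v$2 \<le> b" "v$3 \<le> b" "v$4 \<le> b" using assms(1) by (auto simp: box_iff)
  have p: "0 \<le> p$1" "0 \<le> p$2" "0 \<le> p$3" "0 \<le> p$4" using assms(2) by (auto simp: simplex4_iff)
  have "v$4*(p$1*p$2*p$3) \<le> b*(p$1*p$2*p$3)" using v p by (intro mult_right_mono) auto
  moreover have "v$3*(p$1*p$2*p$4) \<le> b*(p$1*p$2*p$4)" using v p by (intro mult_right_mono) auto
  moreover have "v$2*(p$1*p$3*p$4) \<le> b*(p$1*p$3*p$4)" using v p by (intro mult_right_mono) auto
  moreover have "v$1*(p$2*p$3*p$4) \<le> b*(p$2*p$3*p$4)" using v p by (intro mult_right_mono) auto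
  ultimately show ?thesis by (simp add: Lv_def e3_def algebra_simps)
qed

lemma Lv_nonneg: "p \<in> simplex4 \<Longrightarrow> \<forall>i. 0 \<le> v$i \<Longrightarrow> 0 \<le> Lv v p"
  by (simp add: Lv_def simplex4_iff)

definition rot :: "real^4 \<Rightarrow> real^4" where
  "rot w = (\<chi> i. if i = 1 then w$2 else if i = 2 then w$3 else if i = 3 then w$4 else w$1)"

lemma rot_nth: "rot w $ 1 = w$2" "rot w $ 2 = w$3" "rot w $ 3 = w$4" "rot w $ 4 = w$1"
  by (simp_all add: rot_def)

lemma Lv_rot: "Lv (rot w) (rot p) = Lv w p"
  by (simp add: Lv_def rot_nth algebra_simps)

lemma rot_simplex: "p \<in> simplex4 \<Longrightarrow> rot p \<in> simplex4"
  by (simp add: simplex4_iff rot_nth)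

lemma rot_box: "w \<in> box4 a b \<Longrightarrow> rot w \<in> box4 a b"
  by (simp add: box_iff forall_4 rot_nth)

lemma sum_rot: "Lv w p + Lv (rot w) p + Lv (rot (rot w)) p + Lv (rot (rot (rot w))) p
   = (w$1+w$2+w$3+w$4) * e3 p"
  by (simp add: Lv_def rot_nth e3_def algebra_simps)

lemma box_pos: "0 < a \<Longrightarrow> w \<in> box4 a b \<Longrightarrow> \<forall>i. 0 < w$i"
  by (auto simp: box_iff intro: less_le_trans)

lemma Lmax_rot:
  assumes "0 < a" "w \<in> box4 a b" shows "Lmax w \<le> Lmax (rot w)"
proof -
  have wp: "\<forall>i. 0 < w$i" using box_pos assms by blast
  have rp: "\<forall>i. 0 < rot w $ i" using box_pos assms rot_box by blast
  have "Lmax w = Lv w (opt_design w)" by (rule Lmax_eq(1)[OF wp])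
  also have "\<dots> = Lv (rot w) (rot (opt_design w))" by (simp add: Lv_rot)
  also have "\<dots> \<le> Lmax (rot w)" using opt_ismax[OF wp]
    by (intro Lmax_eq(2)[OF rp] rot_simplex) (simp add: ismax_def)
  finally show ?thesis .
qed




lemma eff_le1: "eff_loss p vt \<le> 1"
  by (simp add: eff_loss_def)

lemma Lmax_bounds:
  assumes "0 < a" "w \<in> box4 a b"
  shows "a/16 \<le> Lmax w" "Lmax w \<le> b/16" "a/16 \<le> Lv w uniform_design"
proof -
  have wp: "\<forall>i. 0 < w$i" using box_pos assms by blast
  have wa: "a \<le> w$1" "a \<le> w$2" "a \<le> w$3" "a \<le> w$4" using assms(2) by (auto simp: box_iff)
  show u: "a/16 \<le> Lv w uniform_design" using wa by (simp add: Lv_u)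
  show "a/16 \<le> Lmax w" using u Lmax_eq(2)[OF wp u_simplex] by linarith
  have os: "opt_design w \<in> simplex4" using opt_ismax[OF wp] by (simp add: ismax_def)
  have "w$1 \<le> b" using assms(2) by (simp add: box_iff)
  then have b0: "0 \<le> b" using assms(1) wa by linarith
  have "Lmax w = Lv w (opt_design w)" by (rule Lmax_eq(1)[OF wp])
  also have "\<dots> \<le> b * e3 (opt_design w)" using Lv_le_b[OF assms(2) os] .
  also have "\<dots> \<le> b * (1/16)" using e3_le[OF os] b0 by (intro mult_left_mono) auto
  finally show "Lmax w \<le> b/16" by simp
qed

lemma key:
  assumes a0: "0 < a" and ab: "a \<le> b" and ps: "p \<in> simplex4"
  shows "(SUP vt\<in>box4 a b. eff_loss uniform_design vt) + (1 - (16*e3 p) powr (1/3)) * (a/b) powr (1/3)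
         \<le> (SUP vt\<in>box4 a b. eff_loss p vt)"
proof -
  define \<kappa> where "\<kappa> = 16*e3 p"
  define \<delta> where "\<delta> = (1 - \<kappa> powr (1/3)) * (a/b) powr (1/3)"
  define R where "R = (SUP vt\<in>box4 a b. eff_loss p vt)"
  have k1: "\<kappa> \<le> 1" using e3_le[OF ps] by (simp add: \<kappa>_def)
  have e3n: "0 \<le> e3 p" using ps by (simp add: e3_def simplex4_iff)
  have k0: "0 \<le> \<kappa>" using e3n by (simp add: \<kappa>_def)
  have kp1: "\<kappa> powr (1/3) \<le> 1" using powr_mono2[of "1/3" \<kappa> 1] k0 k1 by simp
  have bdd: "bdd_above ((\<lambda>vt. eff_loss p vt) ` box4 a b)"
    using eff_le1 by (auto intro!: bdd_aboveI)
  have ne: "box4 a b \<noteq> {}"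
  proof -
    have "(\<chi> i. a) \<in> box4 a b" using ab by (simp add: box_iff)
    then show ?thesis by blast
  qed
  have "\<forall>w\<in>box4 a b. eff_loss uniform_design w \<le> R - \<delta>"
  proof
    fix w assume wb: "w \<in> box4 a b"
    have wp: "\<forall>i. 0 < w$i" using box_pos a0 wb by blast
    define Lm where "Lm = Lmax w"
    define Lu where "Lu = Lv w uniform_design"
    have Lm0: "0 < Lm" using Lmax_bounds(1)[OF a0 wb] a0 by (simp add: Lm_def)
    define ru where "ru = Lu / Lm"
    have ru_ge: "a/b \<le> ru"
    proof -
      have "a/b = (a/16)/(b/16)" by simp
      also have "\<dots> \<le> Lu/Lm"
        using Lmax_bounds[OF a0 wb] a0 Lm0 unfolding Lu_def Lm_def
        by (intro frac_le) auto
      finally show ?thesis by (simp add: ru_def)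
    qed
    have ab0: "0 \<le> a/b" using a0 ab by simp
    have ru0: "0 \<le> ru" using ab0 ru_ge by linarith
    have sw: "Lv w p + Lv (rot w) p + Lv (rot (rot w)) p + Lv (rot (rot (rot w))) p = 4*\<kappa>*Lu"
      using sum_rot[of w p] by (simp add: Lu_def Lv_u \<kappa>_def field_simps)
    have "\<exists>w'\<in>{w, rot w, rot (rot w), rot (rot (rot w))}. Lv w' p \<le> \<kappa>*Lu"
    proof (rule ccontr)
      assume "\<not> ?thesis"
      then have "\<kappa>*Lu < Lv w p" "\<kappa>*Lu < Lv (rot w) p" "\<kappa>*Lu < Lv (rot (rot w)) p" "\<kappa>*Lu < Lv (rot (rot (rot w))) p"
        by auto
      then show False using sw by linarith
    qed
    then obtain w' where w'set: "w' \<in> {w, rot w, rot (rot w), rot (rot (rot w))}" and w'le: "Lv w' p \<le> \<kappa>*Lu" by blast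
    have rb1: "rot w \<in> box4 a b" using rot_box[OF wb] .
    have rb2: "rot (rot w) \<in> box4 a b" using rot_box[OF rb1] .
    have rb3: "rot (rot (rot w)) \<in> box4 a b" using rot_box[OF rb2] .
    have w'b: "w' \<in> box4 a b" using w'set wb rb1 rb2 rb3 by auto
    have l1: "Lmax w \<le> Lmax (rot w)" using Lmax_rot[OF a0 wb] .
    have l2: "Lmax (rot w) \<le> Lmax (rot (rot w))" using Lmax_rot[OF a0 rb1] .
    have l3: "Lmax (rot (rot w)) \<le> Lmax (rot (rot (rot w)))" using Lmax_rot[OF a0 rb2] .
    have Lm': "Lm \<le> Lmax w'" using w'set l1 l2 l3 by (auto simp: Lm_def)
    have w'p: "\<forall>i. 0 < w'$i" using box_pos a0 w'b by blast
    have Lv'0: "0 \<le> Lv w' p" using Lv_nonneg[OF ps] w'p by (simp add: less_imp_le)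
    define r' where "r' = Lv w' p / Lmax w'"
    have r'0: "0 \<le> r'" using Lv'0 Lm0 Lm' by (simp add: r'_def)
    have "r' \<le> Lv w' p / Lm" unfolding r'_def using Lv'0 Lm0 Lm' by (intro divide_left_mono) auto
    also have "\<dots> \<le> (\<kappa>*Lu)/Lm" using w'le Lm0 by (intro divide_right_mono) auto
    finally have r'le: "r' \<le> \<kappa>*ru" by (simp add: ru_def)
    have "r' powr (1/3) \<le> (\<kappa>*ru) powr (1/3)" using r'0 r'le by (intro powr_mono2) auto
    also have "\<dots> = \<kappa> powr (1/3) * ru powr (1/3)" by (rule powr_mult)
    finally have A: "r' powr (1/3) \<le> \<kappa> powr (1/3) * ru powr (1/3)" .
    have B: "(a/b) powr (1/3) \<le> ru powr (1/3)" using ab0 ru_ge by (intro powr_mono2) auto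
    have C: "(1 - \<kappa> powr (1/3)) * (a/b) powr (1/3) \<le> (1 - \<kappa> powr (1/3)) * ru powr (1/3)"
      using B kp1 by (intro mult_left_mono) auto
    have eu: "eff_loss uniform_design w = 1 - ru powr (1/3)"
      by (simp add: eff_loss_def ru_def Lu_def Lm_def)
    have ep: "eff_loss p w' = 1 - r' powr (1/3)" by (simp add: eff_loss_def r'_def)
    have "eff_loss p w' \<le> R" unfolding R_def using w'b bdd by (rule cSUP_upper)
    then show "eff_loss uniform_design w \<le> R - \<delta>"
      using A C eu ep unfolding \<delta>_def by (simp add: algebra_simps)
  qed
  then have "(SUP vt\<in>box4 a b. eff_loss uniform_design vt) \<le> R - \<delta>"
    using ne by (intro cSUP_least) auto
  then show ?thesis by (simp add: R_def \<delta>_def \<kappa>_def)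
qed

theorem theorem3:
  fixes a b :: real and vc :: "real^4"
  assumes "0 < a" and "a \<le> b" and "vc \<in> box4 a b"
  shows "(\<forall>vc'\<in>box4 a b. Rmax a b vc \<le> Rmax a b vc') \<longleftrightarrow> opt_design vc = uniform_design"
proof -
  let ?R = "\<lambda>p. (SUP vt\<in>box4 a b. eff_loss p vt)"
  have Rm: "\<And>v. Rmax a b v = ?R (opt_design v)" by (simp add: Rmax_def)
  have osim: "\<And>v. v \<in> box4 a b \<Longrightarrow> opt_design v \<in> simplex4"
    using opt_ismax box_pos[OF assms(1)] by (simp add: ismax_def)
  have ab0: "0 \<le> (a/b) powr (1/3)" by simp
  define va :: "real^4" where "va = (\<chi> i. a)"
  have vab: "va \<in> box4 a b" using assms(2) by (simp add: box_iff va_def)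
  have vap: "\<forall>i. 0 < va$i" using assms(1) by (simp add: va_def)
  have "ismax va uniform_design"
  proof -
    have "\<And>q. q \<in> simplex4 \<Longrightarrow> Lv va q \<le> Lv va uniform_design"
    proof -
      fix q assume qs: "q \<in> simplex4"
      have "Lv va q = a * e3 q" by (simp add: Lv_def e3_def va_def algebra_simps)
      also have "\<dots> \<le> a * (1/16)" using e3_le[OF qs] assms(1) by (intro mult_left_mono) auto
      also have "\<dots> = Lv va uniform_design" by (simp add: Lv_u va_def)
      finally show "Lv va q \<le> Lv va uniform_design" .
    qed
    then show ?thesis using u_simplex by (simp add: ismax_def)
  qed
  then have oa: "opt_design va = uniform_design" using opt_eq[OF vap] by blast
  show ?thesis
  proof
    assume H: "\<forall>vc'\<in>box4 a b. Rmax a b vc \<le> Rmax a b vc'"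
    show "opt_design vc = uniform_design"
    proof (rule ccontr)
      assume ne: "opt_design vc \<noteq> uniform_design"
      define p where "p = opt_design vc"
      have ps: "p \<in> simplex4" using osim[OF assms(3)] by (simp add: p_def)
      have "16*e3 p < 1" using e3_lt[OF ps] ne by (simp add: p_def)
      then have "(16*e3 p) powr (1/3) < 1 powr (1/3)"
        using ps by (intro powr_less_mono2) (auto simp: e3_def simplex4_iff)
      then have d: "0 < 1 - (16*e3 p) powr (1/3)" by simp
      have "0 < a/b" using assms(1,2) by simp
      then have "0 < (a/b) powr (1/3)" using assms(1,2) by simp
      then have pos: "0 < (1 - (16*e3 p) powr (1/3)) * (a/b) powr (1/3)" using d by simp
      have "?R uniform_design + (1 - (16*e3 p) powr (1/3)) * (a/b) powr (1/3) \<le> ?R p"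
        by (rule key[OF assms(1,2) ps])
      moreover have "Rmax a b vc \<le> Rmax a b va" using H vab by blast
      then have "?R p \<le> ?R uniform_design" by (simp only: Rm oa p_def)
      ultimately show False using pos by linarith
    qed
  next
    assume E: "opt_design vc = uniform_design"
    show "\<forall>vc'\<in>box4 a b. Rmax a b vc \<le> Rmax a b vc'"
    proof
      fix vc' assume vb: "vc' \<in> box4 a b"
      define p where "p = opt_design vc'"
      have ps: "p \<in> simplex4" using osim[OF vb] by (simp add: p_def)
      have "(16*e3 p) powr (1/3) \<le> 1 powr (1/3)"
        using ps e3_le[OF ps] by (intro powr_mono2) (auto simp: e3_def simplex4_iff)
      then have "0 \<le> (1 - (16*e3 p) powr (1/3)) * (a/b) powr (1/3)" using ab0 by simp
      moreover have "?R uniform_design + (1 - (16*e3 p) powr (1/3)) * (a/b) powr (1/3) \<le> ?R p"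
        by (rule key[OF assms(1,2) ps])
      ultimately show "Rmax a b vc \<le> Rmax a b vc'" by (simp add: Rm E p_def)
    qed
  qed
qed


end
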